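(* Let $(S,* )$ be a finite cycle set of size $n\ge 2$ which is square-free (i.e. $s*s=s$ for all $s\in S$) and whose permutation group $\mathcal G$ is abelian. Then its class $d$ satisfies $$d\le a_n:=\max\Big\{\prod_{i=1}^k n_i \;\Big|\; k\in\mathbb N,\ 1\le n_1<\dots<n_k,\ n_1+\dots+n_k=n\Big\}.$$
   Context: A cycle set is a set $S$ with a binary operation $*$ such that for every $s$ the map $t\mapsto s*t$ is a bijection and $(s*t)*(s*u)=(t*s)*(t*u)$ for all $s,t,u$. Write $S=\{s_1,\dots,s_n\}$ and let $\psi(s)\in\mathfrak S_n$ satisfy $s_i*s_j=s_{\psi(s_i)(j)}$. The permutation group $\mathcal G$ is the subgroup of $\mathfrak S_n$ generated by $\psi(s_1),\dots,\psi(s_n)$. With $T(s)=s*s$ and $\psi_k(s)=\psi(T^{k-1}(s))\circ\cdots\circ\psi(T(s))\circ\psi(s)$, the (Dehornoy) class $d$ is the least integer $d\ge1$ such that $\psi_d(s)=\mathrm{id}$ for all $s\in S$. *)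

theory Defs
  imports "HOL-Algebra.Bij" "HOL-Algebra.Generated_Groups"
begin

definition cycle_set :: "'a set \<Rightarrow> ('a \<Rightarrow> 'a \<Rightarrow> 'a) \<Rightarrow> bool" where
  "cycle_set S op \<longleftrightarrow>
     (\<forall>s\<in>S. \<forall>t\<in>S. op s t \<in> S) \<and>
     (\<forall>s\<in>S. bij_betw (op s) S S) \<and>
     (\<forall>s\<in>S. \<forall>t\<in>S. \<forall>u\<in>S. op (op s t) (op s u) = op (op t s) (op t u))"

definition square_free :: "'a set \<Rightarrow> ('a \<Rightarrow> 'a \<Rightarrow> 'a) \<Rightarrow> bool" where
  "square_free S op \<longleftrightarrow> (\<forall>s\<in>S. op s s = s)"

definition psi :: "'a set \<Rightarrow> ('a \<Rightarrow> 'a \<Rightarrow> 'a) \<Rightarrow> 'a \<Rightarrow> ('a \<Rightarrow> 'a)" where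
  "psi S op s = (\<lambda>t\<in>S. op s t)"

definition perm_group :: "'a set \<Rightarrow> ('a \<Rightarrow> 'a \<Rightarrow> 'a) \<Rightarrow> ('a \<Rightarrow> 'a) set" where
  "perm_group S op = generate (BijGroup S) (psi S op ` S)"

definition perm_group_abelian :: "'a set \<Rightarrow> ('a \<Rightarrow> 'a \<Rightarrow> 'a) \<Rightarrow> bool" where
  "perm_group_abelian S op \<longleftrightarrow>
     (\<forall>f\<in>perm_group S op. \<forall>g\<in>perm_group S op.
        f \<otimes>\<^bsub>BijGroup S\<^esub> g = g \<otimes>\<^bsub>BijGroup S\<^esub> f)"

fun psik :: "'a set \<Rightarrow> ('a \<Rightarrow> 'a \<Rightarrow> 'a) \<Rightarrow> nat \<Rightarrow> 'a \<Rightarrow> ('a \<Rightarrow> 'a)" where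
  "psik S op 0 s = (\<lambda>t\<in>S. t)"
| "psik S op (Suc k) s = compose S (psi S op (((\<lambda>x. op x x) ^^ k) s)) (psik S op k s)"

definition cs_class :: "'a set \<Rightarrow> ('a \<Rightarrow> 'a \<Rightarrow> 'a) \<Rightarrow> nat" where
  "cs_class S op = (LEAST d. d \<ge> 1 \<and> (\<forall>s\<in>S. \<forall>t\<in>S. psik S op d s t = t))"

definition a_seq :: "nat \<Rightarrow> nat" where
  "a_seq n = Max {prod_list ns | ns. sorted_wrt (<) ns \<and> (\<forall>x\<in>set ns. 1 \<le> x) \<and> sum_list ns = n}"

end

theory Submission imports Defs begin

lemma pow_mult_fix: "(f ^^ p) x = x \<Longrightarrow> (f ^^ (p*q)) x = x"
proof (induction q)
  case (Suc q)
  have "(f ^^ (p * Suc q)) x = (f ^^ p) ((f ^^ (p*q)) x)" by (simp add: funpow_add)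
  then show ?case using Suc by simp
qed simp

locale csl =
  fixes S :: "'a set" and op :: "'a \<Rightarrow> 'a \<Rightarrow> 'a"
  assumes fin: "finite S"
  and closed: "\<And>s t. s\<in>S \<Longrightarrow> t\<in>S \<Longrightarrow> op s t \<in> S"
  and bij: "\<And>s. s\<in>S \<Longrightarrow> bij_betw (op s) S S"
  and comm: "\<And>s t u. s\<in>S \<Longrightarrow> t\<in>S \<Longrightarrow> u\<in>S \<Longrightarrow> op s (op t u) = op t (op s u)"
begin

lemma pow_in: "s\<in>S \<Longrightarrow> x\<in>S \<Longrightarrow> (op s ^^ k) x \<in> S"
  by (induction k) (auto simp: closed)

lemma inj: "s\<in>S \<Longrightarrow> inj_on (op s) S" using bij bij_betw_imp_inj_on by blast

lemma pow_inj: "s\<in>S \<Longrightarrow> x\<in>S \<Longrightarrow> y\<in>S \<Longrightarrow> (op s ^^ k) x = (op s ^^ k) y \<Longrightarrow> x = y"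
proof (induction k arbitrary: x y)
  case (Suc k)
  then show ?case using inj[OF Suc.prems(1)] pow_in
    by (simp add: inj_on_def)
qed simp

lemma pow_comm: "s\<in>S \<Longrightarrow> t\<in>S \<Longrightarrow> x\<in>S \<Longrightarrow> (op s ^^ k) (op t x) = op t ((op s ^^ k) x)"
  by (induction k) (auto simp: comm pow_in)

lemma period_ex: assumes "s\<in>S" "x\<in>S" shows "\<exists>k>0. (op s ^^ k) x = x"
proof -
  have "\<not> inj_on (\<lambda>i. (op s ^^ i) x) {0..card S}"
  proof
    assume "inj_on (\<lambda>i. (op s ^^ i) x) {0..card S}"
    moreover have "(\<lambda>i. (op s ^^ i) x) ` {0..card S} \<subseteq> S" using pow_in assms by auto
    ultimately have "card {0..card S} \<le> card S" using card_inj_on_le fin by blast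
    then show False by simp
  qed
  then obtain i j where ij: "i \<in> {0..card S}" "j \<in> {0..card S}" "i \<noteq> j" "(op s ^^ i) x = (op s ^^ j) x"
    unfolding inj_on_def by blast
  have gen: "\<exists>k>0. (op s ^^ k) x = x" if "i < j" "(op s ^^ i) x = (op s ^^ j) x" for i j
  proof -
    have "(op s ^^ j) x = (op s ^^ i) ((op s ^^ (j - i)) x)"
      using that by (metis funpow_add le_add_diff_inverse less_imp_le comp_apply)
    then have "(op s ^^ (j - i)) x = x" using pow_inj[OF assms(1) pow_in[OF assms] assms(2)] that by metis
    then show ?thesis using that(1) zero_less_diff by blast
  qed
  show ?thesis using ij gen by (metis linorder_neqE_nat)
qed

definition per where "per s x = (LEAST k. 0<k \<and> (op s ^^ k) x = x)"

lemma per: "s\<in>S \<Longrightarrow> x\<in>S \<Longrightarrow> 0 < per s x \<and> (op s ^^ per s x) x = x"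
  unfolding per_def using period_ex by (rule LeastI_ex) auto

lemma per_min: "0<k \<Longrightarrow> k < per s x \<Longrightarrow> (op s ^^ k) x \<noteq> x"
  unfolding per_def using not_less_Least by blast

lemma pow_dvd: assumes "s\<in>S" "x\<in>S" shows "(op s ^^ k) x = x \<longleftrightarrow> per s x dvd k"
proof
  assume "per s x dvd k"
  then obtain q where "k = per s x * q" by blast
  then show "(op s ^^ k) x = x" using pow_mult_fix per[OF assms] by metis
next
  assume h: "(op s ^^ k) x = x"
  define p where "p = per s x"
  have p: "0 < p" "(op s ^^ p) x = x" using per[OF assms] p_def by auto
  have "k = k mod p + p * (k div p)" by simp
  then have "(op s ^^ k) x = (op s ^^ (k mod p)) ((op s ^^ (p * (k div p))) x)"
    by (metis funpow_add comp_apply)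
  then have "(op s ^^ (k mod p)) x = x" using h pow_mult_fix[OF p(2)] by simp
  moreover have "k mod p < p" using p by simp
  ultimately have "k mod p = 0" using per_min p_def by blast
  then show "per s x dvd k" using p_def by auto
qed

definition R where "R = {(y, op t y) | t y. t\<in>S \<and> y\<in>S}"
definition reach where "reach x = {y. (x,y) \<in> R\<^sup>*}"

lemma reach_S: "(x,y)\<in>R\<^sup>* \<Longrightarrow> x\<in>S \<Longrightarrow> y\<in>S"
  by (induction rule: rtrancl_induct) (auto simp: R_def closed)

lemma pow_R: "s\<in>S \<Longrightarrow> y\<in>S \<Longrightarrow> (y, (op s^^k) y) \<in> R\<^sup>*"
proof (induction k)
  case (Suc k)
  have "((op s^^k) y, (op s^^Suc k) y) \<in> R" using Suc pow_in unfolding R_def by auto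
  then show ?case using Suc by (meson rtrancl.rtrancl_into_rtrancl)
qed simp

lemma R_sym: assumes "(x,y)\<in>R" shows "(y,x)\<in>R\<^sup>*"
proof -
  obtain t where t: "t\<in>S" "x\<in>S" "y = op t x" using assms unfolding R_def by auto
  have "x = (op t ^^ per t x) x" using per t by simp
  also have "\<dots> = (op t ^^ (per t x - 1)) y" using per[OF t(1,2)] t(3)
    by (metis Suc_diff_1 comp_apply funpow_Suc_right)
  finally show ?thesis using pow_R t closed by metis
qed

lemma rtr_sym: "(x,y)\<in>R\<^sup>* \<Longrightarrow> (y,x)\<in>R\<^sup>*"
  by (induction rule: rtrancl_induct) (auto intro: rtrancl_trans R_sym)

lemma same_fix: assumes "s\<in>S" "(x,y)\<in>R\<^sup>*" "x\<in>S"
  shows "(op s^^k) y = y \<longleftrightarrow> (op s^^k) x = x"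
  using assms(2)
proof (induction rule: rtrancl_induct)
  case (step y z)
  obtain t where t: "t\<in>S" "y\<in>S" "z = op t y" using step.hyps(2) unfolding R_def by auto
  have "(op s^^k) z = op t ((op s^^k) y)" using pow_comm assms(1) t by simp
  moreover have "op t ((op s^^k) y) = op t y \<longleftrightarrow> (op s^^k) y = y"
    using inj[OF t(1)] pow_in[OF assms(1) t(2)] t(2) by (auto simp: inj_on_def)
  ultimately show ?case using step.IH t(3) by simp
qed simp

lemma per_same: "s\<in>S \<Longrightarrow> (x,y)\<in>R\<^sup>* \<Longrightarrow> x\<in>S \<Longrightarrow> per s y = per s x"
  unfolding per_def using same_fix by simp

definition orb where "orb s y = (\<lambda>k. (op s^^k) y) ` {0..<per s y}"

lemma orb_all: assumes "s\<in>S" "y\<in>S" shows "orb s y = range (\<lambda>k. (op s^^k) y)"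
proof -
  have "(op s^^k) y \<in> orb s y" for k
  proof -
    have "(op s^^k) y = (op s^^(k mod per s y)) ((op s^^(per s y * (k div per s y))) y)"
      by (metis funpow_add comp_apply mod_mult_div_eq add.commute)
    then have "(op s^^k) y = (op s^^(k mod per s y)) y" using pow_mult_fix[where f="op s" and p="per s y" and x=y] per[OF assms] by simp
    moreover have "k mod per s y < per s y" using per[OF assms] by simp
    ultimately show ?thesis unfolding orb_def by auto
  qed
  then show ?thesis unfolding orb_def by auto
qed

lemma orb_card: assumes "s\<in>S" "y\<in>S" shows "card (orb s y) = per s y"
proof -
  have "inj_on (\<lambda>k. (op s^^k) y) {0..<per s y}"
  proof (rule ccontr)
    assume "\<not> ?thesis"
    then obtain i j where ij: "i < per s y" "j < per s y" "i \<noteq> j" "(op s ^^ i) y = (op s ^^ j) y"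
      unfolding inj_on_def by auto
    have gen: False if "i < j" "j < per s y" "(op s ^^ i) y = (op s ^^ j) y" for i j
    proof -
      have "(op s ^^ j) y = (op s ^^ i) ((op s ^^ (j - i)) y)"
        using that by (metis funpow_add le_add_diff_inverse less_imp_le comp_apply)
      then have "(op s ^^ (j - i)) y = y" using pow_inj[OF assms(1) pow_in[OF assms] assms(2)] that by metis
      then show False using per_min[of "j-i" s y] that by auto
    qed
    show False using ij gen by (metis linorder_neqE_nat)
  qed
  then show ?thesis unfolding orb_def by (simp add: card_image)
qed

lemma orb_eq: assumes "s\<in>S" "y\<in>S" "z \<in> orb s y" shows "orb s z = orb s y"
proof -
  obtain a where a: "z = (op s^^a) y" using assms orb_all by auto
  have zS: "z\<in>S" using a pow_in assms by simp
  have "(op s^^k) z \<in> orb s y" for k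
    using orb_all[OF assms(1,2)] a by (metis funpow_add comp_apply rangeI)
  moreover have "(op s^^k) y \<in> orb s z" for k
  proof -
    have "(op s^^(k + per s y * a - a)) z = (op s^^(k + per s y * a)) y"
    proof -
      have "1 \<le> per s y" using per[OF assms(1,2)] by simp
      then have "1 * a \<le> per s y * a" by (rule mult_le_mono1)
      then have "a \<le> per s y * a" by simp
      then have "k + per s y * a = (k + per s y * a - a) + a" by linarith
      then show ?thesis using a by (metis funpow_add comp_apply)
    qed
    also have "\<dots> = (op s^^k) y"
      using pow_mult_fix[where f="op s" and p="per s y" and x=y and q=a] per[OF assms(1,2)] by (simp add: funpow_add)
    finally show ?thesis using orb_all[OF assms(1) zS] by (metis rangeI)
  qed
  ultimately show ?thesis using orb_all[OF assms(1,2)] orb_all[OF assms(1) zS] by auto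
qed

lemma reach_eq: assumes "z \<in> reach x" shows "reach z = reach x"
proof -
  have xz: "(x,z) \<in> R\<^sup>*" using assms unfolding reach_def by simp
  then have zx: "(z,x) \<in> R\<^sup>*" by (rule rtr_sym)
  show ?thesis
  proof
    show "reach z \<subseteq> reach x" unfolding reach_def using rtrancl_trans[OF xz] by blast
    show "reach x \<subseteq> reach z" unfolding reach_def using rtrancl_trans[OF zx] by blast
  qed
qed

lemma per_dvd_card: assumes "s\<in>S" "x\<in>S" shows "per s x dvd card (reach x)"
proof -
  define C where "C = orb s ` reach x"
  have rS: "reach x \<subseteq> S"
  proof
    fix y assume "y \<in> reach x"
    then have "(x,y) \<in> R\<^sup>*" unfolding reach_def by simp
    then show "y \<in> S" using reach_S assms(2) by blast
  qed
  have fr: "finite (reach x)" using rS fin finite_subset by blast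
  have U: "\<Union>C = reach x"
  proof
    show "\<Union>C \<subseteq> reach x"
    proof
      fix w assume "w \<in> \<Union>C"
      then obtain y where y: "y \<in> reach x" "w \<in> orb s y" unfolding C_def by blast
      have yS: "y \<in> S" using y rS by blast
      then have "w \<in> range (\<lambda>k. (op s^^k) y)" using orb_all[OF assms(1) yS] y by simp
      then obtain k where k: "w = (op s^^k) y" by blast
      have "(y, w) \<in> R\<^sup>*" using pow_R[OF assms(1) yS, of k] k by simp
      moreover have "(x, y) \<in> R\<^sup>*" using y unfolding reach_def by simp
      ultimately show "w \<in> reach x" unfolding reach_def by simp
    qed
    show "reach x \<subseteq> \<Union>C"
    proof
      fix y assume y: "y \<in> reach x"
      have yS: "y \<in> S" using y rS by blast
      have "0 \<in> {0..<per s y}" using per[OF assms(1) yS] by simp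
      then have "(op s^^0) y \<in> orb s y" unfolding orb_def by (rule imageI)
      then have "y \<in> orb s y" by simp
      then show "y \<in> \<Union>C" using y unfolding C_def by blast
    qed
  qed
  have fC: "finite C" using fr C_def by simp
  have fU: "finite (\<Union>C)" using U fr by simp
  have cards: "card c = per s x" if cc: "c \<in> C" for c
  proof -
    obtain y where y: "y \<in> reach x" "c = orb s y" using cc unfolding C_def by blast
    have yS: "y \<in> S" using y rS by blast
    have "(x,y) \<in> R\<^sup>*" using y unfolding reach_def by simp
    then have "per s y = per s x" using per_same assms by blast
    then show "card c = per s x" using orb_card[OF assms(1) yS] y by simp
  qed
  have disj: "c1 \<inter> c2 = {}" if hh: "c1 \<in> C" "c2 \<in> C" "c1 \<noteq> c2" for c1 c2
  proof -
    obtain y1 y2 where yy: "y1 \<in> S" "y2 \<in> S" "c1 = orb s y1" "c2 = orb s y2"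
      using rS hh unfolding C_def by blast
    show "c1 \<inter> c2 = {}"
    proof (rule ccontr)
      assume "c1 \<inter> c2 \<noteq> {}"
      then obtain w where w: "w \<in> c1" "w \<in> c2" by blast
      have "orb s w = c1" using orb_eq[OF assms(1) yy(1)] w(1) yy(3) by simp
      moreover have "orb s w = c2" using orb_eq[OF assms(1) yy(2)] w(2) yy(4) by simp
      ultimately show False using hh(3) by simp
    qed
  qed
  have "per s x * card C = card (\<Union>C)"
    by (rule card_partition[OF fC fU]) (use cards disj in auto)
  then have "card (reach x) = per s x * card C" using U by simp
  then show ?thesis by simp
qed

end

lemma length_le_sum: "\<forall>x\<in>set ns. (1::nat) \<le> x \<Longrightarrow> length ns \<le> sum_list ns"
  by (induction ns) auto

lemma a_seq_fin: "finite {prod_list ns | ns. sorted_wrt (<) ns \<and> (\<forall>x\<in>set ns. 1 \<le> x) \<and> sum_list ns = (n::nat)}"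
proof -
  have "{prod_list ns | ns. sorted_wrt (<) ns \<and> (\<forall>x\<in>set ns. 1 \<le> x) \<and> sum_list ns = n}
     \<subseteq> prod_list ` {ns. set ns \<subseteq> {0..n} \<and> length ns \<le> n}"
  proof
    fix p assume "p \<in> {prod_list ns | ns. sorted_wrt (<) ns \<and> (\<forall>x\<in>set ns. 1 \<le> x) \<and> sum_list ns = n}"
    then obtain ns where ns: "p = prod_list ns" "\<forall>x\<in>set ns. 1 \<le> x" "sum_list ns = n" by auto
    have "set ns \<subseteq> {0..n}" using ns member_le_sum_list by fastforce
    moreover have "length ns \<le> n" using ns length_le_sum by metis
    ultimately show "p \<in> prod_list ` {ns. set ns \<subseteq> {0..n} \<and> length ns \<le> n}" using ns by auto
  qed
  moreover have "finite (prod_list ` {ns. set ns \<subseteq> {0..n} \<and> length ns \<le> n})"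
    using finite_lists_length_le[of "{0..n}" n] by simp
  ultimately show ?thesis using finite_subset by blast
qed

lemma a_seq_ge: assumes "finite D" "D \<noteq> {}" "0 \<notin> D" "\<Sum>D \<le> n" shows "\<Prod>D \<le> a_seq n"
proof -
  define m where "m = Max D"
  define r where "r = n - \<Sum>D"
  define D' where "D' = insert (m + r) (D - {m})"
  have mD: "m \<in> D" using assms m_def by simp
  have lt: "x < m" if xx: "x \<in> D - {m}" for x
  proof -
    have xD: "x \<in> D" "x \<noteq> m" using xx by auto
    have "x \<le> m" unfolding m_def using Max_ge[OF assms(1) xD(1)] .
    then show "x < m" using xD(2) by simp
  qed
  have nin: "m + r \<notin> D - {m}" using lt by fastforce
  have fD: "finite (D - {m})" using assms by simp
  have sumD: "\<Sum>D = m + \<Sum>(D - {m})" using sum.remove[OF assms(1) mD] .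
  have prodD: "\<Prod>D = m * \<Prod>(D - {m})" using prod.remove[OF assms(1) mD] .
  have sD': "\<Sum>D' = n" unfolding D'_def using sum.insert[OF fD nin, of id] sumD assms(4) r_def by simp
  have pD': "\<Prod>D \<le> \<Prod>D'" unfolding D'_def using prod.insert[OF fD nin, of id] prodD by simp
  have fD': "finite D'" using fD D'_def by simp
  define ns where "ns = sorted_list_of_set D'"
  have ns: "set ns = D'" "distinct ns" "sorted_wrt (<) ns" using fD' ns_def by auto
  have "sum_list ns = n" using sum_list_distinct_conv_sum_set[OF ns(2), of id] ns sD' by simp
  moreover have "prod_list ns = \<Prod>D'" using prod.distinct_set_conv_list[OF ns(2), of id] ns by simp
  moreover have "\<forall>x\<in>set ns. 1 \<le> x"
  proof
    fix x assume "x \<in> set ns"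
    then have "x = m + r \<or> x \<in> D" using ns(1) unfolding D'_def by blast
    moreover have "m \<noteq> 0" using mD assms(3) by (cases "m = 0") auto
    moreover have "x \<noteq> 0" if "x \<in> D" using that assms(3) by metis
    ultimately have "x \<noteq> 0" by linarith
    then show "1 \<le> x" by simp
  qed
  ultimately have "\<Prod>D' \<in> {prod_list ns | ns. sorted_wrt (<) ns \<and> (\<forall>x\<in>set ns. 1 \<le> x) \<and> sum_list ns = n}"
    unfolding mem_Collect_eq by (intro exI[of _ ns]) (use ns(3) in auto)
  then have "\<Prod>D' \<le> a_seq n" unfolding a_seq_def using a_seq_fin Max_ge by blast
  then show ?thesis using pD' by simp
qed

theorem mainTheorem4:
  fixes S :: "'a set" and op :: "'a \<Rightarrow> 'a \<Rightarrow> 'a" and n :: nat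
  assumes "finite S" and "card S = n" and "n \<ge> 2"
    and "cycle_set S op"
    and "square_free S op"
    and "perm_group_abelian S op"
  shows "cs_class S op \<le> a_seq n"
proof -
  have closed: "\<And>s t. s\<in>S \<Longrightarrow> t\<in>S \<Longrightarrow> op s t \<in> S"
    and bij: "\<And>s. s\<in>S \<Longrightarrow> bij_betw (op s) S S"
    using assms(4) unfolding cycle_set_def by blast+
  have psiB: "psi S op s \<in> Bij S" if ss: "s \<in> S" for s
  proof -
    have "bij_betw (psi S op s) S S = bij_betw (op s) S S" by (rule bij_betw_cong) (simp add: psi_def)
    then have "bij_betw (psi S op s) S S" using bij[OF ss] by simp
    moreover have "psi S op s \<in> extensional S" unfolding psi_def by (rule restrict_extensional)
    ultimately show ?thesis unfolding Bij_def by blast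
  qed
  have psiG: "psi S op s \<in> perm_group S op" if "s \<in> S" for s
    unfolding perm_group_def using that by (simp add: generate.incl)
  have comm: "op s (op t u) = op t (op s u)" if "s\<in>S" "t\<in>S" "u\<in>S" for s t u
  proof -
    have "psi S op s \<otimes>\<^bsub>BijGroup S\<^esub> psi S op t = psi S op t \<otimes>\<^bsub>BijGroup S\<^esub> psi S op s"
      using assms(6) psiG that unfolding perm_group_abelian_def by blast
    then have "compose S (psi S op s) (psi S op t) u = compose S (psi S op t) (psi S op s) u"
      using psiB that unfolding BijGroup_def by simp
    then show ?thesis using that closed unfolding compose_def psi_def by simp
  qed
  interpret csl S op using assms(1) closed bij comm by unfold_locales auto
  have T: "((\<lambda>x. op x x)^^k) s = s" if "s\<in>S" for s k
    using that assms(5) unfolding square_free_def by (induction k) auto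
  have psik: "psik S op k s t = (op s ^^ k) t" if "s\<in>S" "t\<in>S" for s t k
    using that by (induction k) (auto simp: compose_def psi_def T pow_in)
  define D where "D = card ` reach ` S"
  define L where "L = Lcm D"
  have fD: "finite D" using assms(1) D_def by simp
  have reach_sub: "reach x \<subseteq> S" if "x \<in> S" for x using reach_S that unfolding reach_def by auto
  have self: "x \<in> reach x" for x unfolding reach_def by simp
  have D0: "0 \<notin> D"
  proof
    assume "0 \<in> D"
    then obtain x where "x \<in> S" "card (reach x) = 0" using D_def by auto
    have "finite (reach x)" using reach_sub[OF \<open>x \<in> S\<close>] assms(1) by (rule finite_subset)
    then have "reach x = {}" using \<open>card (reach x) = 0\<close> by simp
    then show False using self[of x] by simp
  qed
  have L0: "L \<noteq> 0" using Lcm_0_iff[OF fD] D0 L_def by simp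
  have "cs_class S op \<le> L"
    unfolding cs_class_def
  proof (rule Least_le, intro conjI ballI)
    show "1 \<le> L" using L0 by simp
    fix s t assume st: "s \<in> S" "t \<in> S"
    have "card (reach t) dvd L" using st D_def L_def by (simp add: dvd_Lcm)
    then have "per s t dvd L" using per_dvd_card st dvd_trans by blast
    then show "psik S op L s t = t" using psik st pow_dvd by simp
  qed
  moreover have "L \<le> \<Prod>D"
  proof -
    have "L dvd \<Prod>D" unfolding L_def
    proof (rule Lcm_least)
      fix b assume "b \<in> D"
      then show "b dvd \<Prod>D" using dvd_prodI[OF fD, of b "\<lambda>x. x"] by simp
    qed
    moreover have "\<Prod>D \<noteq> 0" using fD D0 by simp
    then have "\<Prod>D > 0" by simp
    ultimately show ?thesis by (simp add: dvd_imp_le)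
  qed
  moreover have "\<Prod>D \<le> a_seq n"
  proof (rule a_seq_ge[OF fD _ D0])
    show "D \<noteq> {}" using assms(2,3) D_def by auto
    have "\<Sum>D \<le> sum (id \<circ> card) (reach ` S)" unfolding D_def
      using sum_image_le[of "reach ` S" id card] assms(1) by simp
    also have "\<dots> = card (\<Union>(reach ` S))"
    proof -
      have "pairwise disjnt (reach ` S)"
        unfolding pairwise_def disjnt_def
      proof (intro ballI impI)
        fix A B assume AB: "A \<in> reach ` S" "B \<in> reach ` S" "A \<noteq> B"
        show "A \<inter> B = {}"
        proof (rule ccontr)
          assume "A \<inter> B \<noteq> {}"
          then obtain z where z: "z \<in> A" "z \<in> B" by blast
          obtain a b where ab: "A = reach a" "B = reach b" using AB by blast
          have "reach z = A" using reach_eq z(1) ab(1) by simp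
          moreover have "reach z = B" using reach_eq z(2) ab(2) by simp
          ultimately show False using AB(3) by simp
        qed
      qed
      moreover have "finite A" if AA: "A \<in> reach ` S" for A
      proof -
        obtain a where a: "a \<in> S" "A = reach a" using AA by blast
        show ?thesis using finite_subset[OF reach_sub[OF a(1)] assms(1)] a(2) by simp
      qed
      ultimately have "card (\<Union>(reach ` S)) = sum card (reach ` S)" by (rule card_Union_disjoint)
      then show ?thesis by (simp add: comp_def)
    qed
    also have "\<Union>(reach ` S) = S"
    proof
      show "\<Union>(reach ` S) \<subseteq> S" using reach_sub by auto
      show "S \<subseteq> \<Union>(reach ` S)" using self by auto
    qed
    finally show "\<Sum>D \<le> n" using assms(2) by simp
  qed
  ultimately show ?thesis by simp
qed

end
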